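(* Let $F$, $X_0$, $B$, $C$ be as in the context. Suppose that for every $X_1\in\mathbb{R}^m$ with $X_1\neq 0$ and $CX_1=0$ there is no $X_2\in\mathbb{R}^m$ with $CX_2=-B(X_1,X_1)$ (i.e. no approximate solution of degree 1, $X_0+tX_1$ with $X_1\ne0$, extends to an approximate solution $X_0+tX_1+t^2X_2$ of degree 2). Then $F(X)=0$ has no nonconstant analytic family of solutions with initial term $X_0$.
   Context: Let $m,n\ge 1$ and let $F=(F_1,\dots,F_n):\mathbb{R}^m\to\mathbb{R}^n$, where each component is a polynomial of degree at most 2 written as $F_k(X)=\sum_{i=1}^m\sum_{j=1}^m\alpha^k_{ij}x_ix_j+\sum_{i=1}^m\beta^k_ix_i+\gamma^k$ for $X=(x_1,\dots,x_m)$, with real coefficients and $\alpha^k_{ij}=\alpha^k_{ji}$. Fix $X_0\in\mathbb{R}^m$ with $F(X_0)=0$. Define the bilinear map $B:\mathbb{R}^m\times\mathbb{R}^m\to\mathbb{R}^n$ by $B(X,Y)_k=\sum_{i,j=1}^m\alpha^k_{ij}x_iy_j$, the linear map $A:\mathbb{R}^m\to\mathbb{R}^n$ by $(AX)_k=\sum_{i=1}^m\beta^k_ix_i$, and the linear map $C:\mathbb{R}^m\to\mathbb{R}^n$ by $CX=B(X_0,X)+B(X,X_0)+AX$. An analytic family of solutions with initial term $X_0$ is a power series $X(t)=\sum_{p=0}^\infty X_pt^p$ with $X_p\in\mathbb{R}^m$, positive radius of convergence, constant term equal to $X_0$, and $F(X(t))=0$ for all sufficiently small $t$; it is nonconstant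 if $X_p\neq 0$ for some $p\ge 1$. *)

theory Defs
  imports "HOL-Analysis.Analysis"
begin

definition Fmap :: "('n \<Rightarrow> 'm::finite \<Rightarrow> 'm \<Rightarrow> real) \<Rightarrow> ('n \<Rightarrow> 'm \<Rightarrow> real) \<Rightarrow> ('n \<Rightarrow> real)
    \<Rightarrow> real^'m \<Rightarrow> real^'n::finite" where
  "Fmap \<alpha> \<beta> \<gamma> X = (\<chi> k. (\<Sum>i\<in>UNIV. \<Sum>j\<in>UNIV. \<alpha> k i j * X$i * X$j)
                        + (\<Sum>i\<in>UNIV. \<beta> k i * X$i) + \<gamma> k)"

definition Bmap :: "('n \<Rightarrow> 'm::finite \<Rightarrow> 'm \<Rightarrow> real) \<Rightarrow> real^'m \<Rightarrow> real^'m \<Rightarrow> real^'n::finite" where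
  "Bmap \<alpha> X Y = (\<chi> k. \<Sum>i\<in>UNIV. \<Sum>j\<in>UNIV. \<alpha> k i j * X$i * Y$j)"

definition Amap :: "('n \<Rightarrow> 'm::finite \<Rightarrow> real) \<Rightarrow> real^'m \<Rightarrow> real^'n::finite" where
  "Amap \<beta> X = (\<chi> k. \<Sum>i\<in>UNIV. \<beta> k i * X$i)"

definition Cmap :: "('n \<Rightarrow> 'm::finite \<Rightarrow> 'm \<Rightarrow> real) \<Rightarrow> ('n \<Rightarrow> 'm \<Rightarrow> real) \<Rightarrow> real^'m
    \<Rightarrow> real^'m \<Rightarrow> real^'n::finite" where
  "Cmap \<alpha> \<beta> X0 X = Bmap \<alpha> X0 X + Bmap \<alpha> X X0 + Amap \<beta> X"

definition analytic_family ::
  "(real^'m::finite \<Rightarrow> real^'n::finite) \<Rightarrow> real^'m \<Rightarrow> (nat \<Rightarrow> real^'m) \<Rightarrow> bool" where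
  "analytic_family F X0 Xs \<longleftrightarrow>
     (\<exists>r>0. \<forall>t::real. \<bar>t\<bar> < r \<longrightarrow> summable (\<lambda>p. t ^ p *\<^sub>R Xs p))
     \<and> Xs 0 = X0
     \<and> (\<forall>\<^sub>F t in nhds (0::real). F (\<Sum>p. t ^ p *\<^sub>R Xs p) = 0)"

definition nonconstant_family :: "(nat \<Rightarrow> real^'m::finite) \<Rightarrow> bool" where
  "nonconstant_family Xs \<longleftrightarrow> (\<exists>p\<ge>1. Xs p \<noteq> 0)"

end

theory Submission imports Defs begin

lemma F_shift: "Fmap \<alpha> \<beta> \<gamma> (X0 + V) = Fmap \<alpha> \<beta> \<gamma> X0 + Cmap \<alpha> \<beta> X0 V + Bmap \<alpha> V V"
  by (simp add: vec_eq_iff Fmap_def Cmap_def Bmap_def Amap_def algebra_simps sum.distrib)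

lemma C_scale: "Cmap \<alpha> \<beta> X0 (c *\<^sub>R V) = c *\<^sub>R Cmap \<alpha> \<beta> X0 V"
  by (simp add: vec_eq_iff Cmap_def Bmap_def Amap_def algebra_simps sum_distrib_left)

lemma B_scale: "Bmap \<alpha> (c *\<^sub>R V) (c *\<^sub>R V) = (c^2) *\<^sub>R Bmap \<alpha> V V"
  by (simp add: vec_eq_iff Bmap_def algebra_simps sum_distrib_left power2_eq_square)

lemma C_linear: "linear (Cmap \<alpha> \<beta> X0)"
  by (rule linearI) (simp_all add: vec_eq_iff Cmap_def Bmap_def Amap_def algebra_simps sum_distrib_left sum.distrib)

lemma C_closed: "closed (range (Cmap \<alpha> \<beta> X0))"
  by (rule closed_subspace[OF real_vector.linear_subspace_image[OF C_linear subspace_UNIV]])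

lemma B_tendsto: "(Y \<longlongrightarrow> L) F \<Longrightarrow> ((\<lambda>t. Bmap \<alpha> (Y t) (Y t)) \<longlongrightarrow> Bmap \<alpha> L L) F"
  unfolding Bmap_def by (intro tendsto_intros)

lemma C_tendsto: "(Y \<longlongrightarrow> L) F \<Longrightarrow> ((\<lambda>t. Cmap \<alpha> \<beta> X0 (Y t)) \<longlongrightarrow> Cmap \<alpha> \<beta> X0 L) F"
  unfolding Cmap_def Bmap_def Amap_def by (intro tendsto_intros)

theorem theorem3:
  fixes \<alpha> :: "'n::finite \<Rightarrow> 'm::finite \<Rightarrow> 'm \<Rightarrow> real"
    and \<beta> :: "'n \<Rightarrow> 'm \<Rightarrow> real"
    and \<gamma> :: "'n \<Rightarrow> real"
    and X0 :: "real^'m"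
  assumes sym: "\<And>k i j. \<alpha> k i j = \<alpha> k j i"
    and root: "Fmap \<alpha> \<beta> \<gamma> X0 = 0"
    and no_ext: "\<And>X1. X1 \<noteq> 0 \<Longrightarrow> Cmap \<alpha> \<beta> X0 X1 = 0 \<Longrightarrow>
                   \<not> (\<exists>X2. Cmap \<alpha> \<beta> X0 X2 = - Bmap \<alpha> X1 X1)"
  shows "\<not> (\<exists>Xs. analytic_family (Fmap \<alpha> \<beta> \<gamma>) X0 Xs \<and> nonconstant_family Xs)"
proof
  assume "\<exists>Xs. analytic_family (Fmap \<alpha> \<beta> \<gamma>) X0 Xs \<and> nonconstant_family Xs"
  then obtain Xs r where r: "r > 0" and summ: "\<And>t::real. \<bar>t\<bar> < r \<Longrightarrow> summable (\<lambda>p. t ^ p *\<^sub>R Xs p)"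
    and X0: "Xs 0 = X0" and ev: "\<forall>\<^sub>F t in nhds (0::real). Fmap \<alpha> \<beta> \<gamma> (\<Sum>p. t ^ p *\<^sub>R Xs p) = 0"
    and nc: "\<exists>p\<ge>1. Xs p \<noteq> 0"
    unfolding analytic_family_def nonconstant_family_def by blast
  define q where "q = (LEAST p. p \<ge> 1 \<and> Xs p \<noteq> 0)"
  have q1: "q \<ge> 1" and Xq: "Xs q \<noteq> 0"
    using LeastI_ex[OF nc] unfolding q_def by auto
  have zero: "Xs p = 0" if "1 \<le> p" "p < q" for p
    using not_less_Least[of p "\<lambda>p. p \<ge> 1 \<and> Xs p \<noteq> 0"] that unfolding q_def by auto
  define Y where "Y t = (\<chi> i. \<Sum>p. Xs (p + q) $ i * t ^ p)" for t :: real
  have summi: "summable (\<lambda>p. Xs (p + q) $ i * t ^ p)" if t: "\<bar>t\<bar> < r" for t i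
  proof (cases "t = 0")
    case True then show ?thesis by simp
  next
    case False
    have "summable (\<lambda>p. t ^ (p + q) * Xs (p + q) $ i)"
      using summable_ignore_initial_segment[OF summable_vec_nth[OF summ[OF t], of i], of q] by simp
    then have "summable (\<lambda>p. (t ^ (p + q) * Xs (p + q) $ i) / t ^ q)"
      by (rule summable_divide)
    moreover have "(t ^ (p + q) * Xs (p + q) $ i) / t ^ q = Xs (p + q) $ i * t ^ p" for p
      using False by (simp add: power_add)
    ultimately show ?thesis by simp
  qed
  have Ycont: "(Y \<longlongrightarrow> Xs q) (at 0)"
  proof -
    have "(Y \<longlongrightarrow> Y 0) (at 0)"
      unfolding Y_def
    proof (intro tendsto_vec_lambda)
      fix i
      have "isCont (\<lambda>t. \<Sum>p. Xs (p + q) $ i * t ^ p) 0"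
        by (rule isCont_powser[of _ "r/2"]) (use summi r in auto)
      then show "((\<lambda>t. \<Sum>p. Xs (p + q) $ i * t ^ p) \<longlongrightarrow> (\<Sum>p. Xs (p + q) $ i * 0 ^ p)) (at 0)"
        by (simp add: isCont_def)
    qed
    moreover have "Y 0 = Xs q" unfolding Y_def by (simp add: vec_eq_iff)
    ultimately show ?thesis by simp
  qed
  have Xrep: "(\<Sum>p. t ^ p *\<^sub>R Xs p) = X0 + t ^ q *\<^sub>R Y t" if t: "\<bar>t\<bar> < r" for t
  proof (subst vec_eq_iff, intro allI)
    fix i
    have s: "summable (\<lambda>p. t ^ p * Xs p $ i)"
      using summable_vec_nth[OF summ[OF t], of i] by simp
    have "(\<Sum>p. t ^ p *\<^sub>R Xs p) $ i = (\<Sum>p. t ^ p * Xs p $ i)"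
      using bounded_linear.suminf[OF bounded_linear_vec_nth summ[OF t], of i] by simp
    also have "\<dots> = (\<Sum>p. t ^ (p + q) * Xs (p + q) $ i) + (\<Sum>p<q. t ^ p * Xs p $ i)"
      by (rule suminf_split_initial_segment[OF s])
    also have "(\<Sum>p<q. t ^ p * Xs p $ i) = X0 $ i"
    proof -
      have "(\<Sum>p<q. t ^ p * Xs p $ i) = (\<Sum>p\<in>{0}. t ^ p * Xs p $ i)"
        by (rule sum.mono_neutral_right) (use q1 zero in auto)
      then show ?thesis using X0 by simp
    qed
    also have "(\<Sum>p. t ^ (p + q) * Xs (p + q) $ i) = t ^ q * (\<Sum>p. Xs (p + q) $ i * t ^ p)"
    proof -
      have "(\<Sum>p. t ^ (p + q) * Xs (p + q) $ i) = (\<Sum>p. t ^ q * (Xs (p + q) $ i * t ^ p))"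
        by (simp add: power_add mult_ac)
      also have "\<dots> = t ^ q * (\<Sum>p. Xs (p + q) $ i * t ^ p)"
        by (rule suminf_mult[OF summi[OF t]])
      finally show ?thesis .
    qed
    finally show "(\<Sum>p. t ^ p *\<^sub>R Xs p) $ i = (X0 + t ^ q *\<^sub>R Y t) $ i"
      by (simp add: Y_def)
  qed
  have ev_at: "\<forall>\<^sub>F t in at (0::real). t \<noteq> 0 \<and> \<bar>t\<bar> < r \<and> Fmap \<alpha> \<beta> \<gamma> (\<Sum>p. t ^ p *\<^sub>R Xs p) = 0"
  proof -
    have "\<forall>\<^sub>F t in at (0::real). \<bar>t\<bar> < r"
    proof -
      have "((\<lambda>t::real. \<bar>t\<bar>) \<longlongrightarrow> 0) (at 0)"
        by (rule tendsto_eq_intros) (auto intro: tendsto_ident_at)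
      then show ?thesis using r by (rule order_tendstoD(2))
    qed
    moreover have "\<forall>\<^sub>F t in at (0::real). Fmap \<alpha> \<beta> \<gamma> (\<Sum>p. t ^ p *\<^sub>R Xs p) = 0"
      using ev by (auto simp: eventually_at_filter elim: eventually_mono)
    moreover have "\<forall>\<^sub>F t in at (0::real). t \<noteq> 0" by (auto simp: eventually_at_filter) 
    ultimately show ?thesis by eventually_elim auto
  qed
  have key: "\<forall>\<^sub>F t in at (0::real). t \<noteq> 0 \<and> Cmap \<alpha> \<beta> X0 (Y t) + t ^ q *\<^sub>R Bmap \<alpha> (Y t) (Y t) = 0"
    using ev_at
  proof eventually_elim
    case (elim t)
    then have "0 = Fmap \<alpha> \<beta> \<gamma> (X0 + t ^ q *\<^sub>R Y t)" using Xrep[of t] by simp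
    also have "\<dots> = t ^ q *\<^sub>R (Cmap \<alpha> \<beta> X0 (Y t) + t ^ q *\<^sub>R Bmap \<alpha> (Y t) (Y t))"
      by (simp add: F_shift root C_scale B_scale scaleR_add_right power2_eq_square)
    finally show ?case using elim by simp
  qed
  have lim1: "((\<lambda>t. Cmap \<alpha> \<beta> X0 (Y t) + t ^ q *\<^sub>R Bmap \<alpha> (Y t) (Y t)) \<longlongrightarrow> Cmap \<alpha> \<beta> X0 (Xs q) + 0 ^ q *\<^sub>R Bmap \<alpha> (Xs q) (Xs q)) (at 0)"
    by (intro tendsto_intros C_tendsto B_tendsto Ycont)
  have "((\<lambda>t. Cmap \<alpha> \<beta> X0 (Y t) + t ^ q *\<^sub>R Bmap \<alpha> (Y t) (Y t)) \<longlongrightarrow> 0) (at (0::real))"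
    by (rule tendsto_eventually) (use key in \<open>eventually_elim, auto\<close>)
  with lim1 have "Cmap \<alpha> \<beta> X0 (Xs q) + 0 ^ q *\<^sub>R Bmap \<alpha> (Xs q) (Xs q) = 0"
    by (rule tendsto_unique[OF at_neq_bot])
  then have C0: "Cmap \<alpha> \<beta> X0 (Xs q) = 0"
    using q1 by (simp add: power_0_left)
  have "- Bmap \<alpha> (Xs q) (Xs q) \<in> range (Cmap \<alpha> \<beta> X0)"
  proof (rule Lim_in_closed_set[OF C_closed _ at_neq_bot])
    show "((\<lambda>t. - Bmap \<alpha> (Y t) (Y t)) \<longlongrightarrow> - Bmap \<alpha> (Xs q) (Xs q)) (at 0)"
      by (intro tendsto_intros B_tendsto Ycont)
    show "\<forall>\<^sub>F t in at (0::real). - Bmap \<alpha> (Y t) (Y t) \<in> range (Cmap \<alpha> \<beta> X0)"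
      using key
    proof eventually_elim
      case (elim t)
      have "Cmap \<alpha> \<beta> X0 ((1 / t ^ q) *\<^sub>R Y t) = (1 / t ^ q) *\<^sub>R Cmap \<alpha> \<beta> X0 (Y t)"
        by (rule C_scale)
      also have "Cmap \<alpha> \<beta> X0 (Y t) = - (t ^ q *\<^sub>R Bmap \<alpha> (Y t) (Y t))"
        using elim by (simp add: eq_neg_iff_add_eq_0)
      finally have "Cmap \<alpha> \<beta> X0 ((1 / t ^ q) *\<^sub>R Y t) = - Bmap \<alpha> (Y t) (Y t)"
        using elim by simp
      then show ?case by (metis rangeI)
    qed
  qed
  then obtain X2 where "Cmap \<alpha> \<beta> X0 X2 = - Bmap \<alpha> (Xs q) (Xs q)" by auto
  with no_ext[OF Xq C0] show False by blast
qed
end
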